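(* Let $A$ be a $t\times T$ binary matrix of rank $t$ over $\mathbb F_2$, and let $v\in\mathbb F_2^T$ be a minimal nonzero vector of the row space of $A$ (i.e. no nonzero vector in the row space has support strictly contained in the support of $v$). Let $B$ be the $t\times|v|$ matrix obtained from $A$ by deleting all columns whose index is not in the support of $v$ (here $|v|$ is the size of the support), and let $A'$ be the $(t+1)\times2|v|$ matrix $$A'=\left[\begin{array}{c|c} B & B\\ 1\cdots1 & 0\cdots0\end{array}\right].$$ Then for every $f:\{0,1\}^n\to\{-1,1\}$, $\mathbb E_A(f)\le\sqrt{\mathbb E_{A'}(f)}$ (in particular $\mathbb E_{A'}(f)\ge0$).
   Context: $\{0,1\}^n$ is identified with $\mathbb F_2^n$. For a $t\times T$ binary matrix $A=(A_{ij})$, $\mathbb E_A(f)=\mathbb E_{y_1,\dots,y_t}\prod_{j=1}^T f\big(\sum_{i=1}^tA_{ij}y_i\big)$, with $y_1,\dots,y_t$ independent uniform in $\{0,1\}^n$. *)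

theory Defs
  imports Complex_Main "HOL-Library.Z2" "HOL-Library.FuncSet"
begin

text \<open>A t x T binary matrix is a function
  A :: nat => nat => bit, of which only the entries A i j with i < t, j < T matter.
  Vectors of F_2^m are functions nat => bit vanishing at indices >= m.\<close>

definition cube :: "nat \<Rightarrow> (nat \<Rightarrow> bit) set" where
  "cube n = {x. \<forall>l\<ge>n. x l = 0}"

definition full_row_rank :: "nat \<Rightarrow> nat \<Rightarrow> (nat \<Rightarrow> nat \<Rightarrow> bit) \<Rightarrow> bool" where
  "full_row_rank t T A \<longleftrightarrow>
     (\<forall>c :: nat \<Rightarrow> bit. (\<forall>j<T. (\<Sum>i<t. c i * A i j) = 0) \<longrightarrow> (\<forall>i<t. c i = 0))"

definition row_space :: "nat \<Rightarrow> nat \<Rightarrow> (nat \<Rightarrow> nat \<Rightarrow> bit) \<Rightarrow> (nat \<Rightarrow> bit) set" where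
  "row_space t T A = {w. \<exists>c :: nat \<Rightarrow> bit. \<forall>j. w j = (if j < T then (\<Sum>i<t. c i * A i j) else 0)}"

definition supp :: "(nat \<Rightarrow> bit) \<Rightarrow> nat set" where
  "supp v = {j. v j \<noteq> 0}"

definition minimal_in_row_space :: "nat \<Rightarrow> nat \<Rightarrow> (nat \<Rightarrow> nat \<Rightarrow> bit) \<Rightarrow> (nat \<Rightarrow> bit) \<Rightarrow> bool" where
  "minimal_in_row_space t T A v \<longleftrightarrow>
     v \<in> row_space t T A \<and> supp v \<noteq> {} \<and>
     (\<forall>w \<in> row_space t T A. supp w \<noteq> {} \<longrightarrow> \<not> (supp w \<subset> supp v))"

definition restrict_cols :: "(nat \<Rightarrow> nat \<Rightarrow> bit) \<Rightarrow> nat set \<Rightarrow> nat \<Rightarrow> nat \<Rightarrow> bit" where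
  "restrict_cols A S i j = A i (sorted_list_of_set S ! j)"

definition doubled :: "nat \<Rightarrow> nat \<Rightarrow> (nat \<Rightarrow> nat \<Rightarrow> bit) \<Rightarrow> nat \<Rightarrow> nat \<Rightarrow> bit" where
  "doubled t k B i j =
     (if i < t then (if j < k then B i j else B i (j - k))
      else (if j < k then 1 else 0))"

definition E_mat :: "nat \<Rightarrow> nat \<Rightarrow> nat \<Rightarrow> (nat \<Rightarrow> nat \<Rightarrow> bit) \<Rightarrow> ((nat \<Rightarrow> bit) \<Rightarrow> real) \<Rightarrow> real" where
  "E_mat n t T A f =
     (\<Sum>y \<in> PiE {..<t} (\<lambda>_. cube n). \<Prod>j<T. f (\<lambda>l. \<Sum>i<t. A i j * y i l)) / 2 ^ (n * t)"

end

theory Submission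
  imports Defs
begin


lemma bit_UNIV: "(UNIV :: bit set) = {0, 1}"
  by (auto intro: bit.exhaust)

lemma card_bit: "card (UNIV :: bit set) = 2"
  by (simp add: bit_UNIV)

lemma finite_bit: "finite (UNIV :: bit set)"
  by (simp add: bit_UNIV)

lemma bit_add_self: "(a::bit) + a = 0"
  by (cases a) (simp_all del: add_bit_eq_xor)

lemma bij_cube: "bij_betw (\<lambda>x. restrict x {..<n}) (cube n) (PiE {..<n} (\<lambda>_. UNIV))"
proof (rule bij_betw_byWitness[where f' = "\<lambda>g l. if l < n then g l else 0"])
  show "\<forall>a\<in>cube n. (\<lambda>l. if l < n then restrict a {..<n} l else 0) = a"
  proof
    fix a assume "a \<in> cube n"
    then show "(\<lambda>l. if l < n then restrict a {..<n} l else 0) = a"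
      unfolding cube_def by (intro ext) auto
  qed
  show "\<forall>a'\<in>PiE {..<n} (\<lambda>_. UNIV::bit set). restrict (\<lambda>l. if l < n then a' l else 0) {..<n} = a'"
  proof
    fix a' :: "nat \<Rightarrow> bit" assume a: "a' \<in> PiE {..<n} (\<lambda>_. UNIV)"
    show "restrict (\<lambda>l. if l < n then a' l else 0) {..<n} = a'"
    proof (rule ext)
      fix l show "restrict (\<lambda>l. if l < n then a' l else 0) {..<n} l = a' l"
        using a by (cases "l < n") (auto simp: PiE_def extensional_def)
    qed
  qed
  show "(\<lambda>x. restrict x {..<n}) ` cube n \<subseteq> PiE {..<n} (\<lambda>_. UNIV)"
  proof (rule image_subsetI)
    fix x :: "nat \<Rightarrow> bit"
    show "restrict x {..<n} \<in> PiE {..<n} (\<lambda>_. UNIV)" by (simp only: restrict_PiE_iff) simp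
  qed
  show "(\<lambda>g l. if l < n then g l else 0) ` PiE {..<n} (\<lambda>_. UNIV) \<subseteq> cube n"
  proof (rule image_subsetI)
    fix g :: "nat \<Rightarrow> bit"
    show "(\<lambda>l. if l < n then g l else 0) \<in> cube n" by (simp add: cube_def)
  qed
qed

lemma finite_cube: "finite (cube n)"
  using bij_betw_finite[OF bij_cube[of n]] by (simp add: finite_PiE finite_bit)

lemma card_cube: "card (cube n) = 2 ^ n"
  using bij_betw_same_card[OF bij_cube[of n]] by (simp add: card_PiE card_bit)

lemma card_Y: "card (PiE {..<t::nat} (\<lambda>_. cube n)) = 2 ^ (n * t)"
  by (simp add: card_PiE card_cube power_mult)

lemma finite_Y: "finite (PiE {..<t::nat} (\<lambda>_. cube n))"
  by (intro finite_PiE finite_lessThan finite_cube)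


lemma cs_sum:
  fixes a :: "'a \<Rightarrow> real"
  assumes "finite Y"
  shows "(sum a Y)^2 \<le> real (card Y) * sum (\<lambda>y. (a y)^2) Y"
proof -
  have "0 \<le> (\<Sum>y\<in>Y. \<Sum>y'\<in>Y. (a y - a y')^2)" by (intro sum_nonneg) auto
  also have "\<dots> = (\<Sum>y\<in>Y. \<Sum>y'\<in>Y. ((a y)^2 + (a y')^2 - 2 * (a y * a y')))"
    by (intro sum.cong refl) (simp add: power2_diff)
  also have "\<dots> = (\<Sum>y\<in>Y. real (card Y) * (a y)^2 + sum (\<lambda>y. (a y)^2) Y - 2 * (a y * sum a Y))"
    by (intro sum.cong refl) (simp add: sum_subtractf sum.distrib flip: sum_distrib_left)
  also have "\<dots> = 2 * (real (card Y) * sum (\<lambda>y. (a y)^2) Y) - 2 * (sum a Y)^2"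
    by (simp add: sum_subtractf sum.distrib power2_eq_square flip: sum_distrib_left sum_distrib_right)
  finally show ?thesis by simp
qed


declare add_bit_eq_xor[simp del] mult_bit_eq_and[simp del]

definition colv :: "nat \<Rightarrow> (nat \<Rightarrow> nat \<Rightarrow> bit) \<Rightarrow> (nat \<Rightarrow> nat \<Rightarrow> bit) \<Rightarrow> nat \<Rightarrow> nat \<Rightarrow> bit" where
  "colv t A y j = (\<lambda>l. \<Sum>i<t. A i j * y i l)"

definition addv :: "(nat \<Rightarrow> bit) \<Rightarrow> (nat \<Rightarrow> bit) \<Rightarrow> nat \<Rightarrow> bit" where
  "addv a b = (\<lambda>l. a l + b l)"

definition shiftY :: "nat \<Rightarrow> (nat \<Rightarrow> bit) \<Rightarrow> (nat \<Rightarrow> bit) \<Rightarrow> (nat \<Rightarrow> nat \<Rightarrow> bit) \<Rightarrow> nat \<Rightarrow> nat \<Rightarrow> bit" where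
  "shiftY t g z y = (\<lambda>i\<in>{..<t}. \<lambda>l. y i l + g i * z l)"

lemma colv_in_cube:
  assumes "y \<in> PiE {..<t} (\<lambda>_. cube n)"
  shows "colv t A y j \<in> cube n"
  using assms by (auto simp: colv_def cube_def PiE_iff)

lemma addv_in_cube: "a \<in> cube n \<Longrightarrow> b \<in> cube n \<Longrightarrow> addv a b \<in> cube n"
  by (auto simp: addv_def cube_def)

lemma addv_assoc: "addv (addv a b) c = addv a (addv b c)"
  by (simp add: addv_def add.assoc)

lemma addv_self: "addv (addv a b) b = a"
  by (simp add: addv_def add.assoc bit_add_self)

lemma shiftY_in:
  assumes "y \<in> PiE {..<t} (\<lambda>_. cube n)" "z \<in> cube n"
  shows "shiftY t g z y \<in> PiE {..<t} (\<lambda>_. cube n)"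
  using assms by (auto simp: shiftY_def cube_def PiE_iff)

lemma shiftY_shiftY:
  assumes "y \<in> PiE {..<t} (\<lambda>_. cube n)"
  shows "shiftY t g z (shiftY t g z y) = y"
proof (rule ext)
  fix i show "shiftY t g z (shiftY t g z y) i = y i"
  proof (cases "i < t")
    case True then show ?thesis by (simp add: shiftY_def add.assoc bit_add_self)
  next
    case False then show ?thesis using assms by (simp add: shiftY_def PiE_iff extensional_def)
  qed
qed

lemma sum_shift:
  fixes F :: "(nat \<Rightarrow> nat \<Rightarrow> bit) \<Rightarrow> real"
  assumes "z \<in> cube n"
  shows "sum F (PiE {..<t} (\<lambda>_. cube n)) = sum (\<lambda>y. F (shiftY t g z y)) (PiE {..<t} (\<lambda>_. cube n))"
  by (rule sum.reindex_bij_witness[where i = "shiftY t g z" and j = "shiftY t g z"])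
     (auto simp: shiftY_shiftY shiftY_in assms)

lemma colv_shift:
  "colv t A (shiftY t g z y) j = addv (colv t A y j) (\<lambda>l. (\<Sum>i<t. g i * A i j) * z l)"
  by (intro ext) (simp add: colv_def addv_def shiftY_def distrib_left sum.distrib sum_distrib_left
      algebra_simps)

lemma sum_cube_shift:
  fixes F :: "(nat \<Rightarrow> bit) \<Rightarrow> real"
  assumes "z' \<in> cube n"
  shows "(\<Sum>z\<in>cube n. F (addv z' z)) = (\<Sum>z\<in>cube n. F z)"
  by (rule sum.reindex_bij_witness[where i = "addv z'" and j = "addv z'"])
     (insert assms, auto simp: addv_def cube_def add.assoc[symmetric] bit_add_self)

lemma addv_zero: "addv a (\<lambda>l. 0 * z l) = a" by (simp add: addv_def)
lemma addv_one: "addv a (\<lambda>l. 1 * z l) = addv a z" by (simp add: addv_def)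



lemma colA':
  "(\<lambda>l. \<Sum>i<t+1. doubled t k B i j * (y(t:=w)) i l) =
     (if j < k then addv (colv t B y j) w else colv t B y (j - k))"
proof (rule ext)
  fix l
  have e: "(\<Sum>i<t. doubled t k B i j * (y(t:=w)) i l) = (\<Sum>i<t. (if j<k then B i j else B i (j-k)) * y i l)"
    by (rule sum.cong) (auto simp: doubled_def)
  show "(\<Sum>i<t+1. doubled t k B i j * (y(t:=w)) i l) =
     (if j < k then addv (colv t B y j) w else colv t B y (j - k)) l"
    using e by (cases "j < k") (simp_all add: doubled_def colv_def addv_def)
qed

lemma colv_restrict: "colv t (restrict_cols A S) y j = colv t A y (sorted_list_of_set S ! j)"
  by (simp add: colv_def restrict_cols_def)

lemma sum_PiE_Suc:
  fixes G :: "(nat \<Rightarrow> nat \<Rightarrow> bit) \<Rightarrow> real"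
  shows "(\<Sum>y'\<in>PiE {..<t+1} (\<lambda>_. C). G y') = (\<Sum>y\<in>PiE {..<t} (\<lambda>_. C). \<Sum>w\<in>C. G (y(t:=w)))"
proof -
  have "(\<Sum>y'\<in>PiE {..<t+1} (\<lambda>_. C). G y') = (\<Sum>p\<in>PiE {..<t} (\<lambda>_. C) \<times> C. G ((fst p)(t := snd p)))"
  proof (rule sum.reindex_bij_witness[where i = "\<lambda>p. (fst p)(t := snd p)" and j = "\<lambda>y'. (y'(t:=undefined), y' t)"])
    fix a assume a: "a \<in> PiE {..<t+1} (\<lambda>_. C)"
    show "(fst (a(t := undefined), a t))(t := snd (a(t := undefined), a t)) = a" by simp
    have "a(t:=undefined) \<in> PiE {..<t} (\<lambda>_. C)"
    proof (rule PiE_I)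
      fix x assume "x \<in> {..<t}"
      then show "(a(t:=undefined)) x \<in> C" using PiE_mem[OF a, of x] by simp
    next
      fix x assume x: "x \<notin> {..<t}"
      show "(a(t:=undefined)) x = undefined"
      proof (cases "x = t")
        case False then have "x \<notin> {..<t+1}" using x by simp
        then show ?thesis using PiE_arb[OF a] False by simp
      qed simp
    qed
    moreover have "a t \<in> C" using PiE_mem[OF a, of t] by simp
    ultimately show "(a(t := undefined), a t) \<in> PiE {..<t} (\<lambda>_. C) \<times> C" by simp
  next
    fix b assume b: "b \<in> PiE {..<t} (\<lambda>_. C) \<times> C"
    obtain y w where bw: "b = (y, w)" by (cases b)
    with b have y: "y \<in> PiE {..<t} (\<lambda>_. C)" and w: "w \<in> C" by auto
    have yt: "y t = undefined" using PiE_arb[OF y, of t] by simp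
    show "((fst b)(t := snd b)) \<in> PiE {..<t+1} (\<lambda>_. C)"
    proof (rule PiE_I)
      fix x assume "x \<in> {..<t+1}"
      then show "((fst b)(t := snd b)) x \<in> C" using PiE_mem[OF y, of x] w bw by (cases "x = t") auto
    next
      fix x assume "x \<notin> {..<t+1}"
      then show "((fst b)(t := snd b)) x = undefined" using PiE_arb[OF y, of x] bw by auto
    qed
    have "y(t := w, t := undefined) = y" using yt by (simp add: fun_eq_iff)
    then show "(((fst b)(t := snd b))(t := undefined), ((fst b)(t := snd b)) t) = b"
      using bw by simp
  qed simp
  also have "\<dots> = (\<Sum>y\<in>PiE {..<t} (\<lambda>_. C). \<Sum>w\<in>C. G (y(t:=w)))"
    by (simp add: sum.cartesian_product case_prod_beta)
  finally show ?thesis .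
qed



lemma final_arith:
  fixes s D N M :: real
  assumes "N > 0" "M > 0" "(M * s)^2 \<le> N * (M * D)"
  shows "(s / N)^2 \<le> D / (N * M)"
proof -
  have "M * (M * s^2) \<le> M * (N * D)" using assms(3) by (simp add: power_mult_distrib power2_eq_square algebra_simps)
  then have "M * s^2 \<le> N * D" using assms(2) by simp
  then have "s^2 \<le> N * D / M" using assms(2) by (simp add: field_simps)
  then have "s^2 / N^2 \<le> (N * D / M) / N^2" using assms(1) by (intro divide_right_mono) auto
  also have "\<dots> = D / (N * M)" using assms by (simp add: field_simps power2_eq_square)
  finally show ?thesis by (simp add: power_divide)
qed

theorem proposition7p6:
  fixes n t T :: nat and A :: "nat \<Rightarrow> nat \<Rightarrow> bit" and v :: "nat \<Rightarrow> bit"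
    and f :: "(nat \<Rightarrow> bit) \<Rightarrow> real"
  assumes "full_row_rank t T A"
    and "minimal_in_row_space t T A v"
    and "\<forall>x \<in> cube n. f x = 1 \<or> f x = -1"
  shows "0 \<le> E_mat n (t + 1) (2 * card (supp v)) (doubled t (card (supp v)) (restrict_cols A (supp v))) f
    \<and> E_mat n t T A f
        \<le> sqrt (E_mat n (t + 1) (2 * card (supp v)) (doubled t (card (supp v)) (restrict_cols A (supp v))) f)"
proof -
  from assms(2) obtain c where vc: "\<And>j. v j = (if j < T then (\<Sum>i<t. c i * A i j) else 0)"
    unfolding minimal_in_row_space_def row_space_def by blast
  define S where "S = supp v"
  define k where "k = card S"
  define s where "s = sorted_list_of_set S"
  define A' where "A' = doubled t k (restrict_cols A S)"
  define Y where "Y = PiE {..<t} (\<lambda>_. cube n)"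
  define C where "C = cube n"
  have SsubT: "S \<subseteq> {..<T}" using vc by (auto simp: S_def supp_def)
  have finS: "finite S" using SsubT finite_subset by blast
  have v1: "(\<Sum>i<t. c i * A i j) = 1" if "j \<in> S" for j
    using that SsubT vc[of j] by (auto simp: S_def supp_def)
  have v0: "(\<Sum>i<t. c i * A i j) = 0" if "j < T" "j \<notin> S" for j
    using that vc[of j] by (auto simp: S_def supp_def)
  have bijs: "bij_betw (nth s) {..<k} S"
    by (rule bij_betw_nth) (simp_all add: s_def k_def finS)
  have finY: "finite Y" unfolding Y_def by (rule finite_Y)
  have finC: "finite C" unfolding C_def by (rule finite_cube)
  have cardY: "real (card Y) = 2 ^ (n * t)" unfolding Y_def by (simp add: card_Y)
  have cardC: "real (card C) = 2 ^ n" unfolding C_def by (simp add: card_cube)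
  have fabs: "\<bar>f x\<bar> = 1" if "x \<in> C" for x using assms(3) that by (auto simp: C_def)
  have colvC: "colv t A y j \<in> C" if "y \<in> Y" for y j
    using that colv_in_cube by (simp add: Y_def C_def)
  have addvC: "addv a b \<in> C" if "a \<in> C" "b \<in> C" for a b
    using that addv_in_cube by (simp add: C_def)

  define Q where "Q y z = (\<Prod>j\<in>S. f (addv (colv t A y j) z))" for y z
  define P where "P y = (\<Prod>j\<in>{..<T} - S. f (colv t A y j))" for y
  define H where "H y = (\<Sum>z\<in>C. Q y z)" for y
  define R where "R y w = (\<Prod>j\<in>S. f (addv (colv t A y j) w)) * (\<Prod>j\<in>S. f (colv t A y j))" for y w
  define SP where "SP = (\<Sum>y\<in>Y. \<Prod>j<T. f (colv t A y j))"
  define D where "D = (\<Sum>y\<in>Y. \<Sum>w\<in>C. R y w)"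

  have EA: "E_mat n t T A f = SP / 2 ^ (n * t)"
    by (simp add: E_mat_def SP_def Y_def colv_def)

  have stepA: "SP = (\<Sum>y\<in>Y. P y * Q y z)" if z: "z \<in> C" for z
  proof -
    have "SP = (\<Sum>y\<in>Y. \<Prod>j<T. f (colv t A (shiftY t c z y) j))"
      unfolding SP_def Y_def by (rule sum_shift) (use z in \<open>simp add: C_def\<close>)
    also have "\<dots> = (\<Sum>y\<in>Y. P y * Q y z)"
    proof (rule sum.cong[OF refl])
      fix y
      let ?g = "\<lambda>j. f (addv (colv t A y j) (\<lambda>l. (\<Sum>i<t. c i * A i j) * z l))"
      have "(\<Prod>j<T. f (colv t A (shiftY t c z y) j)) = (\<Prod>j<T. ?g j)"
        by (simp add: colv_shift)
      also have "\<dots> = prod ?g ({..<T} - S) * prod ?g S"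
        by (rule prod.subset_diff[OF SsubT]) simp
      also have "prod ?g ({..<T} - S) = P y"
        unfolding P_def
      proof (rule prod.cong[OF refl])
        fix j assume "j \<in> {..<T} - S"
        then have "(\<Sum>i<t. c i * A i j) = 0" using v0 by auto
        then show "?g j = f (colv t A y j)" by (simp only: addv_zero)
      qed
      also have "prod ?g S = Q y z"
        unfolding Q_def
      proof (rule prod.cong[OF refl])
        fix j assume "j \<in> S"
        then have "(\<Sum>i<t. c i * A i j) = 1" using v1 by auto
        then show "?g j = f (addv (colv t A y j) z)" by (simp only: addv_one)
      qed
      finally show "(\<Prod>j<T. f (colv t A (shiftY t c z y) j)) = P y * Q y z" .
    qed
    finally show ?thesis .
  qed
  have stepA': "real (card C) * SP = (\<Sum>y\<in>Y. P y * H y)"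
  proof -
    have "real (card C) * SP = (\<Sum>z\<in>C. SP)" by simp
    also have "\<dots> = (\<Sum>z\<in>C. \<Sum>y\<in>Y. P y * Q y z)" by (rule sum.cong) (auto simp: stepA)
    also have "\<dots> = (\<Sum>y\<in>Y. \<Sum>z\<in>C. P y * Q y z)" by (rule sum.swap)
    also have "\<dots> = (\<Sum>y\<in>Y. P y * H y)" by (simp add: H_def sum_distrib_left)
    finally show ?thesis .
  qed
  have Qshift: "Q (shiftY t c z y) w = (\<Prod>j\<in>S. f (addv (addv (colv t A y j) z) w))" for z y w
    unfolding Q_def
  proof (rule prod.cong[OF refl])
    fix j assume "j \<in> S"
    then have "(\<Sum>i<t. c i * A i j) = 1" using v1 by auto
    then show "f (addv (colv t A (shiftY t c z y) j) w) = f (addv (addv (colv t A y j) z) w)"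
      by (simp only: colv_shift addv_one)
  qed
  have inner: "(\<Sum>y\<in>Y. Q y z * Q y z') = (\<Sum>y\<in>Y. R y (addv z z'))" if z: "z \<in> C" for z z'
  proof -
    have "(\<Sum>y\<in>Y. Q y z * Q y z') = (\<Sum>y\<in>Y. Q (shiftY t c z y) z * Q (shiftY t c z y) z')"
      unfolding Y_def by (rule sum_shift) (use z in \<open>simp add: C_def\<close>)
    also have "\<dots> = (\<Sum>y\<in>Y. R y (addv z z'))"
      by (rule sum.cong[OF refl]) (simp add: Qshift R_def addv_self addv_assoc)
    finally show ?thesis .
  qed
  have stepC: "(\<Sum>y\<in>Y. (H y)^2) = real (card C) * D"
  proof -
    have "(\<Sum>y\<in>Y. (H y)^2) = (\<Sum>y\<in>Y. \<Sum>z\<in>C. \<Sum>z'\<in>C. Q y z * Q y z')"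
      by (simp add: H_def power2_eq_square sum_product)
    also have "\<dots> = (\<Sum>z\<in>C. \<Sum>y\<in>Y. \<Sum>z'\<in>C. Q y z * Q y z')" by (rule sum.swap)
    also have "\<dots> = (\<Sum>z\<in>C. \<Sum>z'\<in>C. \<Sum>y\<in>Y. Q y z * Q y z')"
      by (rule sum.cong[OF refl]) (rule sum.swap)
    also have "\<dots> = (\<Sum>z\<in>C. \<Sum>z'\<in>C. \<Sum>y\<in>Y. R y (addv z z'))"
      by (intro sum.cong refl inner)
    also have "\<dots> = (\<Sum>z\<in>C. \<Sum>w\<in>C. \<Sum>y\<in>Y. R y w)"
      by (rule sum.cong[OF refl]) (unfold C_def, rule sum_cube_shift[where F = "\<lambda>w. \<Sum>y\<in>Y. R y w"], simp)
    also have "\<dots> = real (card C) * D"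
      by (simp add: D_def sum.swap[of _ C Y])
    finally show ?thesis .
  qed
  have prodD: "(\<Prod>j<2*k. f (\<lambda>l. \<Sum>i<t+1. A' i j * (y(t:=w)) i l)) = R y w" for y w
  proof -
    let ?g = "\<lambda>j. f (\<lambda>l. \<Sum>i<t+1. A' i j * (y(t:=w)) i l)"
    have "(\<Prod>j<2*k. ?g j) = prod ?g {0..<k} * prod ?g {k..<k+k}"
      by (simp add: prod.atLeastLessThan_concat atLeast0LessThan[symmetric] mult_2)
    also have "prod ?g {k..<k+k} = prod (\<lambda>j. ?g (j + k)) {0..<k}"
      using prod.shift_bounds_nat_ivl[of ?g 0 k k] by simp
    also have "prod (\<lambda>j. ?g (j + k)) {0..<k} = (\<Prod>j\<in>S. f (colv t A y j))"
    proof -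
      have "prod (\<lambda>j. ?g (j + k)) {0..<k} = (\<Prod>j<k. f (colv t A y (s ! j)))"
        unfolding A'_def colA' by (rule prod.cong) (auto simp: colv_restrict s_def)
      also have "\<dots> = (\<Prod>j\<in>S. f (colv t A y j))"
        by (rule prod.reindex_bij_betw[OF bijs])
      finally show ?thesis .
    qed
    also have "prod ?g {0..<k} = (\<Prod>j\<in>S. f (addv (colv t A y j) w))"
    proof -
      have "prod ?g {0..<k} = (\<Prod>j<k. f (addv (colv t A y (s ! j)) w))"
        unfolding A'_def colA' by (rule prod.cong) (auto simp: colv_restrict s_def)
      also have "\<dots> = (\<Prod>j\<in>S. f (addv (colv t A y j) w))"
        by (rule prod.reindex_bij_betw[OF bijs])
      finally show ?thesis .
    qed
    finally show ?thesis by (simp add: R_def)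
  qed
  have stepD: "E_mat n (t + 1) (2 * k) A' f = D / 2 ^ (n * (t + 1))"
  proof -
    have "(\<Sum>y'\<in>PiE {..<t+1} (\<lambda>_. C). \<Prod>j<2*k. f (\<lambda>l. \<Sum>i<t+1. A' i j * y' i l))
        = (\<Sum>y\<in>Y. \<Sum>w\<in>C. \<Prod>j<2*k. f (\<lambda>l. \<Sum>i<t+1. A' i j * (y(t:=w)) i l))"
      unfolding Y_def C_def by (rule sum_PiE_Suc)
    also have "\<dots> = D" by (simp only: prodD D_def)
    finally show ?thesis by (simp add: E_mat_def C_def)
  qed
  have Pabs: "\<bar>P y\<bar> = 1" if "y \<in> Y" for y
    using that by (simp add: P_def abs_prod fabs colvC)
  have CS: "(real (card C) * SP)^2 \<le> real (card Y) * (real (card C) * D)"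
  proof -
    have "(real (card C) * SP)^2 \<le> real (card Y) * (\<Sum>y\<in>Y. (P y * H y)^2)"
      unfolding stepA' by (rule cs_sum[OF finY])
    also have "(\<Sum>y\<in>Y. (P y * H y)^2) = (\<Sum>y\<in>Y. (H y)^2)"
    proof (rule sum.cong[OF refl])
      fix y assume "y \<in> Y"
      then have "(P y)^2 = 1" using Pabs by (metis abs_power2 power2_abs one_power2)
      then show "(P y * H y)^2 = (H y)^2" by (simp add: power_mult_distrib)
    qed
    finally show ?thesis unfolding stepC .
  qed
  have Dnn: "0 \<le> D"
  proof -
    have "0 \<le> (\<Sum>y\<in>Y. (H y)^2)" by (intro sum_nonneg) auto
    moreover have "0 < real (card C)" using cardC by simp
    ultimately show ?thesis unfolding stepC by (simp add: zero_le_mult_iff)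
  qed
  have EA'eq: "E_mat n (t + 1) (2 * k) A' f = D / (real (card Y) * real (card C))"
    unfolding stepD cardY cardC by (simp add: power_add)
  have EA'nn: "0 \<le> E_mat n (t + 1) (2 * k) A' f" unfolding EA'eq using Dnn by simp
  have sq: "(E_mat n t T A f)^2 \<le> E_mat n (t + 1) (2 * k) A' f"
    unfolding EA'eq EA cardY[symmetric]
    by (rule final_arith) (use cardY cardC CS in auto)
  have "E_mat n t T A f \<le> sqrt (E_mat n (t + 1) (2 * k) A' f)"
    by (rule real_le_rsqrt[OF sq])
  then show ?thesis using EA'nn unfolding A'_def k_def S_def by simp
qed
end
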